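(* Let $\Sigma$ be a linear subspace of $\mathbb{R}^d$ and $\zeta_n\in\Sigma\cap S^{d-1}$. Then, after passing to a subsequence, there exist orthonormal vectors $\zeta^1,\dots,\zeta^k\in\Sigma$, with $1\le k\le\dim\Sigma$, such that $E(\zeta_n)\to E(\zeta^1,\dots,\zeta^k)$ as $n\to\infty$, in the sense that for every $z\in\mathbb{Z}^d$, $\mathbf 1_{E(\zeta_n)}(z)\to\mathbf 1_{E(\zeta^1,\dots,\zeta^k)}(z)$.
   Context: For an orthogonal collection of nonzero vectors $\zeta^1,\dots,\zeta^k\in\mathbb{R}^d$, $E(\zeta^1,\dots,\zeta^k)=\bigcup_{j=1}^k\{z\in\mathbb{Z}^d: z\cdot\zeta^i=0\text{ for all }1\le i\le j-1,\ \text{and } z\cdot\zeta^j>0\}$ (for $j=1$ the first condition is vacuous). In particular $E(\zeta)=\{z\in\mathbb{Z}^d:z\cdot\zeta>0\}$. *)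

theory Defs
  imports "HOL-Analysis.Analysis"
begin

definition lattice :: "(real^'n) set" where
  "lattice = {z. \<forall>i. z $ i \<in> \<int>}"

definition Eset :: "(real^'n) list \<Rightarrow> (real^'n) set" where
  "Eset zs = {z \<in> lattice. \<exists>j < length zs.
      (\<forall>i < j. z \<bullet> (zs ! i) = 0) \<and> z \<bullet> (zs ! j) > 0}"

end

theory Submission
  imports Defs "HOL-Library.Infinite_Set"
begin

definition Ep :: "(real^'n) list \<Rightarrow> real^'n \<Rightarrow> bool" where
  "Ep zs z = (\<exists>j<length zs. (\<forall>i<j. z \<bullet> zs!i = 0) \<and> z \<bullet> zs!j > 0)"

lemma Ep_Nil[simp]: "\<not> Ep [] z" by (simp add: Ep_def)

lemma Ep_Cons: "Ep (a#zs) z \<longleftrightarrow> z \<bullet> a > 0 \<or> (z \<bullet> a = 0 \<and> Ep zs z)"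
proof
  assume "Ep (a#zs) z"
  then obtain j where j: "j < Suc (length zs)" "\<forall>i<j. z \<bullet> (a#zs)!i = 0" "z \<bullet> (a#zs)!j > 0"
    by (auto simp: Ep_def)
  show "z \<bullet> a > 0 \<or> (z \<bullet> a = 0 \<and> Ep zs z)"
  proof (cases j)
    case 0 then show ?thesis using j by simp
  next
    case (Suc j')
    have "z \<bullet> a = 0" using j(2) Suc by (metis nth_Cons_0 zero_less_Suc)
    moreover have "\<forall>i<j'. z \<bullet> zs!i = 0" using j(2) Suc by auto
    ultimately show ?thesis using j Suc by (auto simp: Ep_def)
  qed
next
  assume "z \<bullet> a > 0 \<or> (z \<bullet> a = 0 \<and> Ep zs z)"
  then show "Ep (a#zs) z"
  proof
    assume "z \<bullet> a > 0" then show ?thesis unfolding Ep_def by (intro exI[of _ 0]) auto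
  next
    assume h: "z \<bullet> a = 0 \<and> Ep zs z"
    then obtain j where j: "j < length zs" "\<forall>i<j. z \<bullet> zs!i = 0" "z \<bullet> zs!j > 0"
      by (auto simp: Ep_def)
    have "\<forall>i<Suc j. z \<bullet> (a#zs)!i = 0" using h j(2) by (auto simp: less_Suc_eq_0_disj)
    then show ?thesis unfolding Ep_def using j by (intro exI[of _ "Suc j"]) auto
  qed
qed

lemma key:
  fixes T :: "(real^'n) set" and u :: "nat \<Rightarrow> real^'n"
  shows "subspace T \<Longrightarrow> (\<forall>n. u n \<in> T) \<Longrightarrow> \<exists>r zs. strict_mono r \<and> length zs \<le> dim T \<and>
     set zs \<subseteq> T \<and> (\<forall>i<length zs. norm (zs!i) = 1) \<and>
     (\<forall>i<length zs. \<forall>j<length zs. i \<noteq> j \<longrightarrow> zs!i \<bullet> zs!j = 0) \<and>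
     (zs = [] \<longrightarrow> (\<exists>n. u (r n) = 0)) \<and>
     (\<forall>z. (\<lambda>n. if z \<bullet> u (r n) > 0 then 1 else 0 :: real) \<longlonglongrightarrow> (if Ep zs z then 1 else 0))"
proof (induction "dim T" arbitrary: T u rule: less_induct)
  case less
  show ?case
  proof (cases "infinite {n. u n = 0}")
    case True
    let ?r = "enumerate {n. u n = 0}"
    have "\<forall>n. u (?r n) = 0" using enumerate_in_set[OF True] by auto
    then show ?thesis using strict_mono_enumerate[OF True]
      by (intro exI[of _ ?r] exI[of _ "[]"]) auto
  next
    case False
    then obtain M where M: "\<forall>n\<in>{n. u n = 0}. n \<le> M"
      using finite_nat_set_iff_bounded_le by blast
    define N where "N = Suc M"
    have N: "\<forall>n\<ge>N. u n \<noteq> 0"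
    proof (intro allI impI)
      fix n assume "n \<ge> N"
      then have "\<not> n \<le> M" unfolding N_def by simp
      then show "u n \<noteq> 0" using M by auto
    qed
    define v where "v n = u (n + N) /\<^sub>R norm (u (n + N))" for n
    have vT: "v n \<in> sphere 0 1 \<inter> T" for n
      using N less.prems(2) subspace_scale[OF less.prems(1)] by (auto simp: v_def)
    have cpt: "compact (sphere (0::real^'n) 1 \<inter> T)"
      by (simp add: closed_subspace compact_Int_closed less.prems(1))
    obtain a r1 where a: "a \<in> sphere 0 1 \<inter> T" "strict_mono r1" "(v \<circ> r1) \<longlonglongrightarrow> a"
      using seq_compactE[OF compact_imp_seq_compact[OF cpt], of v] vT by blast
    define T' where "T' = T \<inter> {x. a \<bullet> x = 0}"
    have sT': "subspace T'" unfolding T'_def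
      by (rule subspace_inter[OF less.prems(1) subspace_hyperplane])
    have "a \<bullet> a = 1" using a(1) by (simp add: dot_square_norm)
    then have "a \<notin> T'" unfolding T'_def by auto
    moreover have "T' \<subseteq> T" unfolding T'_def by auto
    ultimately have "T' \<subset> T" using a(1) by blast
    then have "span T' \<subset> span T"
      by (subst span_eq_iff[THEN iffD2, OF sT'], subst span_eq_iff[THEN iffD2, OF less.prems(1)])
    then have dimlt: "dim T' < dim T"
      by (rule dim_psubset)
    define w where "w n = v (r1 n) - (v (r1 n) \<bullet> a) *\<^sub>R a" for n
    have wT: "\<forall>n. w n \<in> T'"
    proof
      fix n
      have "w n \<in> T" unfolding w_def using vT a(1) less.prems(1)
        by (simp add: subspace_diff subspace_scale)
      moreover have "a \<bullet> w n = 0" using a(1) unfolding w_def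
        by (simp add: inner_diff_right inner_commute dot_square_norm power2_eq_square)
      ultimately show "w n \<in> T'" unfolding T'_def by auto
    qed
    obtain r2 zs' where IH: "strict_mono r2" "length zs' \<le> dim T'" "set zs' \<subseteq> T'"
      "\<forall>i<length zs'. norm (zs'!i) = 1"
      "\<forall>i<length zs'. \<forall>j<length zs'. i \<noteq> j \<longrightarrow> zs'!i \<bullet> zs'!j = 0"
      "\<forall>z. (\<lambda>n. if z \<bullet> w (r2 n) > 0 then 1 else 0 :: real) \<longlonglongrightarrow> (if Ep zs' z then 1 else 0)"
      using less.hyps[OF dimlt sT' wT] by (elim exE conjE) (rule that)
    define r where "r n = r1 (r2 n) + N" for n
    have smr: "strict_mono r" unfolding r_def using IH(1) a(2)
      by (simp add: strict_mono_def)
    define zs where "zs = a # zs'"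
    have "length zs \<le> dim T" using IH(2) dimlt unfolding zs_def by simp
    moreover have "set zs \<subseteq> T" using IH(3) a(1) unfolding zs_def T'_def by auto
    moreover have "\<forall>i<length zs. norm (zs!i) = 1" using IH(4) a(1)
      unfolding zs_def by (auto simp: nth_Cons split: nat.split)
    moreover have "\<forall>i<length zs. \<forall>j<length zs. i \<noteq> j \<longrightarrow> zs!i \<bullet> zs!j = 0"
    proof (intro allI impI)
      fix i j assume ij: "i < length zs" "j < length zs" "i \<noteq> j"
      have orth: "a \<bullet> zs'!k = 0" if "k < length zs'" for k
        using IH(3) that unfolding T'_def by (auto dest!: nth_mem)
      show "zs!i \<bullet> zs!j = 0"
      proof (cases i)
        case 0
        then obtain j' where j': "j = Suc j'" using ij by (cases j) auto
        then have "j' < length zs'" using ij unfolding zs_def by simp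
        then show ?thesis using orth 0 j' unfolding zs_def by simp
      next
        case (Suc i')
        then have i': "i' < length zs'" using ij unfolding zs_def by simp
        show ?thesis
        proof (cases j)
          case 0
          then show ?thesis using orth[OF i'] Suc unfolding zs_def by (simp add: inner_commute)
        next
          case (Suc j')
          then have "j' < length zs'" "i' \<noteq> j'" using ij \<open>i = Suc i'\<close> unfolding zs_def by auto
          then show ?thesis using IH(5) i' Suc \<open>i = Suc i'\<close> unfolding zs_def by simp
        qed
      qed
    qed
    moreover have "\<forall>z. (\<lambda>n. if z \<bullet> u (r n) > 0 then 1 else 0 :: real) \<longlonglongrightarrow> (if Ep zs z then 1 else 0)"
    proof
      fix z
      define y where "y n = v (r1 (r2 n))" for n
      have sgn: "(z \<bullet> u (r n) > 0) = (z \<bullet> y n > 0)" for n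
      proof -
        have "u (r n) \<noteq> 0" using N unfolding r_def by simp
        then have pos: "0 < inverse (norm (u (r n)))" by simp
        have "z \<bullet> y n = inverse (norm (u (r n))) * (z \<bullet> u (r n))"
          unfolding y_def v_def r_def by simp
        then show ?thesis using pos by (simp add: zero_less_mult_iff)
      qed
      have ylim: "y \<longlonglongrightarrow> a"
        using LIMSEQ_subseq_LIMSEQ[OF a(3) IH(1)] unfolding y_def by (simp add: o_def)
      then have zlim: "(\<lambda>n. z \<bullet> y n) \<longlonglongrightarrow> z \<bullet> a"
        by (intro tendsto_intros)
      consider "z \<bullet> a > 0" | "z \<bullet> a < 0" | "z \<bullet> a = 0" by linarith
      then show "(\<lambda>n. if z \<bullet> u (r n) > 0 then 1 else 0 :: real) \<longlonglongrightarrow> (if Ep zs z then 1 else 0)"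
      proof cases
        case 1
        then have "eventually (\<lambda>n. z \<bullet> y n > 0) sequentially"
          using order_tendstoD(1)[OF zlim] by blast
        then have "eventually (\<lambda>n. (if z \<bullet> u (r n) > 0 then 1 else 0 :: real) = 1) sequentially"
          by eventually_elim (simp add: sgn)
        moreover have "Ep zs z" using 1 unfolding zs_def by (simp add: Ep_Cons)
        ultimately show ?thesis by (simp add: tendsto_eventually)
      next
        case 2
        then have "eventually (\<lambda>n. z \<bullet> y n < 0) sequentially"
          using order_tendstoD(2)[OF zlim] by blast
        then have "eventually (\<lambda>n. (if z \<bullet> u (r n) > 0 then 1 else 0 :: real) = 0) sequentially"
          by eventually_elim (simp add: sgn)
        moreover have "\<not> Ep zs z" using 2 unfolding zs_def by (simp add: Ep_Cons)
        ultimately show ?thesis by (simp add: tendsto_eventually)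
      next
        case 3
        have "z \<bullet> y n = z \<bullet> w (r2 n)" for n
          using 3 unfolding y_def w_def by (simp add: inner_diff_right)
        then have "(\<lambda>n. if z \<bullet> u (r n) > 0 then 1 else 0 :: real) =
             (\<lambda>n. if z \<bullet> w (r2 n) > 0 then 1 else 0)" by (simp add: sgn)
        moreover have "Ep zs z = Ep zs' z" using 3 unfolding zs_def by (simp add: Ep_Cons)
        ultimately show ?thesis using IH(6) by simp
      qed
    qed
    moreover have "zs \<noteq> []" unfolding zs_def by simp
    ultimately show ?thesis using smr
      by (intro exI[of _ r] exI[of _ zs] conjI impI; (assumption | simp only:))
  qed
qed

theorem mainTheorem19:
  fixes S :: "(real^'n) set" and \<zeta> :: "nat \<Rightarrow> real^'n"
  assumes "subspace S"
    and "\<And>n. \<zeta> n \<in> S"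
    and "\<And>n. norm (\<zeta> n) = 1"
  shows "\<exists>r zs. strict_mono r \<and>
           1 \<le> length zs \<and> length zs \<le> dim S \<and>
           set zs \<subseteq> S \<and>
           (\<forall>i < length zs. norm (zs ! i) = 1) \<and>
           (\<forall>i < length zs. \<forall>j < length zs. i \<noteq> j \<longrightarrow> zs ! i \<bullet> zs ! j = 0) \<and>
           (\<forall>z \<in> lattice.
              (\<lambda>n. indicator (Eset [\<zeta> (r n)]) z :: real)
                \<longlonglongrightarrow> indicator (Eset zs) z)"
proof -
  have allS: "\<forall>n. \<zeta> n \<in> S" using assms(2) by blast
  obtain r zs where K: "strict_mono r" "length zs \<le> dim S" "set zs \<subseteq> S"
     "\<forall>i<length zs. norm (zs!i) = 1"
     "\<forall>i<length zs. \<forall>j<length zs. i \<noteq> j \<longrightarrow> zs!i \<bullet> zs!j = 0"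
     "zs = [] \<longrightarrow> (\<exists>n. \<zeta> (r n) = 0)"
     "\<forall>z. (\<lambda>n. if z \<bullet> \<zeta> (r n) > 0 then 1 else 0 :: real) \<longlonglongrightarrow> (if Ep zs z then 1 else 0)"
    using key[OF assms(1) allS] by (elim exE conjE) (rule that)
  have ne: "zs \<noteq> []"
  proof
    assume "zs = []"
    then obtain n where "\<zeta> (r n) = 0" using K(6) by blast
    then show False using assms(3)[of "r n"] by simp
  qed
  have E1: "indicator (Eset [x]) z = (if z \<bullet> x > 0 then 1 else (0::real))" if "z \<in> lattice" for x z
    using that by (simp add: indicator_def Eset_def)
  have E2: "indicator (Eset zs) z = (if Ep zs z then 1 else (0::real))" if "z \<in> lattice" for z
    using that by (simp add: indicator_def Eset_def Ep_def)
  show ?thesis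
  proof (intro exI[of _ r] exI[of _ zs] conjI ballI)
    show "1 \<le> length zs" using ne by (cases zs) auto
  next
    fix z :: "real^'n" assume z: "z \<in> lattice"
    show "(\<lambda>n. indicator (Eset [\<zeta> (r n)]) z :: real) \<longlonglongrightarrow> indicator (Eset zs) z"
      using K(7) E1[OF z] E2[OF z] by simp
  qed (simp_all add: K)
qed

end
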